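(* Assume $d(\eta,\cdot)$ attains its minimum over $\mathcal G$ at $g^*=g^{(\theta^* )}$ with $\theta^*\neq0$, and let $g^{bf}$ be the maximum-entropy element of $P$. Let $g^{ds}\in\Delta_k^n$ be any OCDS prediction and $g^{ds*}=g^{ds}(w^*,b^*_{1:p})$ (assuming its parameters lie in $(0,1)$). If $$\|\epsilon\|_\infty\le\frac{d(\eta,g^{ds*})-d(\eta,g^* )+d(\eta,g^{ds})-d(\eta,g^{ds*})}{2\|\theta^*\|_1},$$ then $d(\eta,g^{bf})\le d(\eta,g^{ds})$.
   Context: Standard setup. Let $n\ge1$, $k\ge2$, $p\ge1$ be integers and $m=p+k$. There are $n$ data points $x_1,\dots,x_n$ and $p$ rules $h^{(1)},\dots,h^{(p)}$, each a map from $\{x_1,\dots,x_n\}$ to $\{1,\dots,k\}\cup\{?\}$, where "?" means abstain. Let $n_j\ge1$ be the number of indices $i$ with $h^{(j)}(x_i)\neq ?$. $\Delta_k$ denotes the probability simplex in $\mathbb{R}^k$; an element $z\in\Delta_k^n\subset\mathbb{R}^{nk}$ is written $z=(z_1,\dots,z_n)$ with $z_i=(z_{i1},\dots,z_{ik})\in\Delta_k$. For $j\le p$ let $h^{(j)}\in\{0,1\}^{nk}$ also denote the vector with $h^{(j)}_{i\ell}=1$ iff $h^{(j)}(x_i)=\ell$; for $\ell\le k$ let $\vec e^{\,n}_\ell\in\{0,1\}^{nk}$ have entries $(\vec e^{\,n}_\ell)_{i\ell'}=\mathbf 1(\ell'=\ell)$. The matrix $A\in\mathbb{R}^{m\times nk}$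 has rows $a^{(j)}=h^{(j)}/n_j$ for $1\le j\le p$ and $a^{(p+\ell)}=\vec e^{\,n}_\ell/n$ for $1\le\ell\le k$. For $\theta\in\mathbb{R}^m$ put $a^{(\theta)}=A^\top\theta\in\mathbb{R}^{nk}$ (entries $a^{(\theta)}_{i\ell}$) and define $g^{(\theta)}\in\Delta_k^n$ by $g^{(\theta)}_{i\ell}=\exp(a^{(\theta)}_{i\ell})/\sum_{\ell'=1}^k\exp(a^{(\theta)}_{i\ell'})$; let $\mathcal G=\{g^{(\theta)}:\theta\in\mathbb{R}^m\}$. A fixed "true labeling" $\eta\in\Delta_k^n$ is given and $b^*:=A\eta\in\mathbb{R}^m$; write $b^*_j$ ($j\le p$) for the empirical rule accuracies and $w^*_\ell:=b^*_{p+\ell}$ for the empirical class frequencies. Given $b\in\mathbb{R}^m$ and $\epsilon\in\mathbb{R}^m$ with $\epsilon\ge0$ and $b-\epsilon\le b^*\le b+\epsilon$ (entrywise), let $P=\{z\in\Delta_k^n:\ b-\epsilon\le Az\le b+\epsilon\}$ (entrywise). The maximum-entropy element of $P$ is the unique minimizer of $\sum_{i,\ell}z_{i\ell}\log z_{i\ell}$ over $P$ (with $0\log0=0$). For $\mu,\nu\in\Delta_k^n$, $d(\mu,\nu)=\sum_{i=1}^n\mathrm{KL}(\mu_i\|\nu_i)=\sum_{i,\ell}\mu_{i\ell}\log(\mu_{i\ell}/\nu_{i\ell})$, with $0\log(0/x)=0$. One-coin Dawid–Skene (OCDS) prediction: for class frequencies $w\in\Delta_k$ and rule accuracies $b\in(0,1)^p$,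 $g^{ds}(w,b)\in\Delta_k^n$ is defined by $g^{ds}(w,b)_{i\ell}=\widehat g_{i\ell}/\sum_{\ell'}\widehat g_{i\ell'}$ where $\widehat g_{i\ell}=w_\ell\prod_{j:\,h^{(j)}(x_i)=\ell}b_j\prod_{j:\,h^{(j)}(x_i)\notin\{\ell,?\}}\frac{1-b_j}{k-1}$; an OCDS prediction is any $g^{ds}(w,b)$ of this form or a limit in $\Delta_k^n$ of such. *)

theory Defs
  imports "HOL-Analysis.Analysis"
begin

text \<open>Conventions: data points are indexed by i < n, classes by l < k (0-based),
  rules by j < p; the rows of A are indexed by j < p (rules) and p + l, l < k (classes).
  A rule is h :: nat => nat => nat option with h j i = None meaning abstain and
  h j i = Some l meaning label l.  Elements of R^{nk} are functions nat => nat => real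
  (only entries i < n, l < k matter); elements of R^m are functions nat => real.\<close>

definition in_simplex :: "nat \<Rightarrow> (nat \<Rightarrow> real) \<Rightarrow> bool" where
  "in_simplex k v \<longleftrightarrow> (\<forall>l<k. 0 \<le> v l) \<and> (\<Sum>l<k. v l) = 1"

definition simplexn :: "nat \<Rightarrow> nat \<Rightarrow> (nat \<Rightarrow> nat \<Rightarrow> real) \<Rightarrow> bool" where
  "simplexn n k z \<longleftrightarrow> (\<forall>i<n. in_simplex k (z i))"

definition nrule :: "nat \<Rightarrow> (nat \<Rightarrow> nat \<Rightarrow> nat option) \<Rightarrow> nat \<Rightarrow> nat" where
  "nrule n h j = card {i. i < n \<and> h j i \<noteq> None}"

definition hvec :: "(nat \<Rightarrow> nat \<Rightarrow> nat option) \<Rightarrow> nat \<Rightarrow> nat \<Rightarrow> nat \<Rightarrow> real" where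
  "hvec h j i l = (if h j i = Some l then 1 else 0)"

definition Amat :: "nat \<Rightarrow> nat \<Rightarrow> (nat \<Rightarrow> nat \<Rightarrow> nat option) \<Rightarrow> nat \<Rightarrow> nat \<Rightarrow> nat \<Rightarrow> real" where
  "Amat n p h j i l =
     (if j < p then hvec h j i l / real (nrule n h j)
      else if l = j - p then 1 / real n else 0)"

definition Aop :: "nat \<Rightarrow> nat \<Rightarrow> nat \<Rightarrow> (nat \<Rightarrow> nat \<Rightarrow> nat option)
    \<Rightarrow> (nat \<Rightarrow> nat \<Rightarrow> real) \<Rightarrow> nat \<Rightarrow> real" where
  "Aop n k p h z j = (\<Sum>i<n. \<Sum>l<k. Amat n p h j i l * z i l)"

definition atheta :: "nat \<Rightarrow> nat \<Rightarrow> nat \<Rightarrow> (nat \<Rightarrow> nat \<Rightarrow> nat option)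
    \<Rightarrow> (nat \<Rightarrow> real) \<Rightarrow> nat \<Rightarrow> nat \<Rightarrow> real" where
  "atheta n k p h \<theta> i l = (\<Sum>j<p+k. Amat n p h j i l * \<theta> j)"

definition gtheta :: "nat \<Rightarrow> nat \<Rightarrow> nat \<Rightarrow> (nat \<Rightarrow> nat \<Rightarrow> nat option)
    \<Rightarrow> (nat \<Rightarrow> real) \<Rightarrow> nat \<Rightarrow> nat \<Rightarrow> real" where
  "gtheta n k p h \<theta> i l =
     exp (atheta n k p h \<theta> i l) / (\<Sum>l'<k. exp (atheta n k p h \<theta> i l'))"

definition klterm :: "real \<Rightarrow> real \<Rightarrow> ereal" where
  "klterm \<mu> \<nu> = (if \<mu> = 0 then 0 else if \<nu> = 0 then \<infinity> else ereal (\<mu> * ln (\<mu> / \<nu>)))"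

definition dKL :: "nat \<Rightarrow> nat \<Rightarrow> (nat \<Rightarrow> nat \<Rightarrow> real) \<Rightarrow> (nat \<Rightarrow> nat \<Rightarrow> real) \<Rightarrow> ereal" where
  "dKL n k \<mu> \<nu> = (\<Sum>i<n. \<Sum>l<k. klterm (\<mu> i l) (\<nu> i l))"

definition negent :: "nat \<Rightarrow> nat \<Rightarrow> (nat \<Rightarrow> nat \<Rightarrow> real) \<Rightarrow> real" where
  "negent n k z = (\<Sum>i<n. \<Sum>l<k. (if z i l = 0 then 0 else z i l * ln (z i l)))"

definition polyP :: "nat \<Rightarrow> nat \<Rightarrow> nat \<Rightarrow> (nat \<Rightarrow> nat \<Rightarrow> nat option)
    \<Rightarrow> (nat \<Rightarrow> real) \<Rightarrow> (nat \<Rightarrow> real) \<Rightarrow> (nat \<Rightarrow> nat \<Rightarrow> real) \<Rightarrow> bool" where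
  "polyP n k p h b \<epsilon> z \<longleftrightarrow> simplexn n k z \<and>
     (\<forall>j<p+k. b j - \<epsilon> j \<le> Aop n k p h z j \<and> Aop n k p h z j \<le> b j + \<epsilon> j)"

text \<open>Maximum-entropy element of P: the minimizer of the negative entropy over P
  (unique by strict convexity).\<close>
definition is_maxent :: "nat \<Rightarrow> nat \<Rightarrow> nat \<Rightarrow> (nat \<Rightarrow> nat \<Rightarrow> nat option)
    \<Rightarrow> (nat \<Rightarrow> real) \<Rightarrow> (nat \<Rightarrow> real) \<Rightarrow> (nat \<Rightarrow> nat \<Rightarrow> real) \<Rightarrow> bool" where
  "is_maxent n k p h b \<epsilon> g \<longleftrightarrow> polyP n k p h b \<epsilon> g \<and>
     (\<forall>z. polyP n k p h b \<epsilon> z \<longrightarrow> negent n k g \<le> negent n k z)"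

definition ghat :: "nat \<Rightarrow> nat \<Rightarrow> (nat \<Rightarrow> nat \<Rightarrow> nat option)
    \<Rightarrow> (nat \<Rightarrow> real) \<Rightarrow> (nat \<Rightarrow> real) \<Rightarrow> nat \<Rightarrow> nat \<Rightarrow> real" where
  "ghat k p h w b i l =
     w l * (\<Prod>j\<in>{j. j < p \<and> h j i = Some l}. b j)
         * (\<Prod>j\<in>{j. j < p \<and> h j i \<noteq> Some l \<and> h j i \<noteq> None}. (1 - b j) / (real k - 1))"

definition gds :: "nat \<Rightarrow> nat \<Rightarrow> (nat \<Rightarrow> nat \<Rightarrow> nat option)
    \<Rightarrow> (nat \<Rightarrow> real) \<Rightarrow> (nat \<Rightarrow> real) \<Rightarrow> nat \<Rightarrow> nat \<Rightarrow> real" where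
  "gds k p h w b i l = ghat k p h w b i l / (\<Sum>l'<k. ghat k p h w b i l')"

text \<open>OCDS prediction: an element of Delta_k^n that is a (pointwise) limit of
  OCDS predictions g^ds(w,b) with w in Delta_k and b in (0,1)^p
  (constant sequences give the exact form).\<close>
definition is_ocds :: "nat \<Rightarrow> nat \<Rightarrow> nat \<Rightarrow> (nat \<Rightarrow> nat \<Rightarrow> nat option)
    \<Rightarrow> (nat \<Rightarrow> nat \<Rightarrow> real) \<Rightarrow> bool" where
  "is_ocds n k p h g \<longleftrightarrow> simplexn n k g \<and>
     (\<exists>ws bs. (\<forall>t::nat. in_simplex k (ws t) \<and> (\<forall>j<p. 0 < bs t j \<and> bs t j < 1)) \<and>
        (\<forall>i<n. \<forall>l<k. (\<lambda>t. gds k p h (ws t) (bs t) i l) \<longlonglongrightarrow> g i l))"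

end

theory Submission
  imports Defs
begin

definition fx :: "real \<Rightarrow> real" where "fx x = (if x = 0 then 0 else x * ln x)"
definition kr :: "real \<Rightarrow> real \<Rightarrow> real" where "kr a b = (if a = 0 then 0 else a * ln (a / b))"

lemma tangent:
  assumes z: "z > 0" and g: "g \<ge> 0"
  shows "fx z - fx g \<le> (1 + ln z) * (z - g)"
proof (cases "g = 0")
  case True thus ?thesis using z by (simp add: fx_def algebra_simps)
next
  case False
  hence gp: "g > 0" using g by simp
  have "ln (z/g) \<le> z/g - 1" using z gp by (intro ln_le_minus_one) simp
  hence "ln z - ln g \<le> z/g - 1" using z gp by (simp add: ln_div)
  hence "g * (ln z - ln g) \<le> g * (z/g - 1)" using gp by (intro mult_left_mono) auto
  hence "g * (ln z - ln g) \<le> z - g" using gp by (simp add: algebra_simps)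
  thus ?thesis using z gp by (simp add: fx_def algebra_simps)
qed

lemma gibbs_term:
  assumes q: "q > 0" and z: "z \<ge> 0"
  shows "fx z - z * ln q \<ge> z - q"
proof (cases "z = 0")
  case True thus ?thesis using q by (simp add: fx_def)
next
  case False
  hence zp: "z > 0" using z by simp
  have "ln (q/z) \<le> q/z - 1" using zp q by (intro ln_le_minus_one) simp
  hence "ln q - ln z \<le> q/z - 1" using zp q by (simp add: ln_div)
  hence "z * (ln q - ln z) \<le> z * (q/z - 1)" using zp by (intro mult_left_mono) auto
  hence "z * (ln q - ln z) \<le> q - z" using zp by (simp add: algebra_simps)
  thus ?thesis using zp by (simp add: fx_def algebra_simps)
qed

lemma kr_split: "a > 0 \<Longrightarrow> b > 0 \<Longrightarrow> kr a b = fx a - a * ln b"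
  by (simp add: kr_def fx_def ln_div algebra_simps)

lemma kr_ge: assumes "a \<ge> 0" "b \<ge> 0" "a > 0 \<Longrightarrow> b > 0" shows "kr a b \<ge> a - b"
proof (cases "a = 0")
  case True thus ?thesis using assms by (simp add: kr_def)
next
  case False
  hence ap: "a > 0" "b > 0" using assms by auto
  have "fx a - a * ln b \<ge> a - b" using gibbs_term[of b a] ap by simp
  thus ?thesis using kr_split[OF ap] by simp
qed

lemma per_term_R:
  assumes e: "e \<ge> 0" and g: "g \<ge> 0" and t: "0 < t" "t < 1" and zdef: "z = (1-t)*g + t*e"
  shows "kr e z \<le> fx e - fx g - g * ln (1-t) - (if z = 0 then 0 else ln z * (e - g))"
proof (cases "z = 0")
  case True
  have "(1-t)*g \<ge> 0" "t*e \<ge> 0" using e g t by auto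
  hence "e = 0" "g = 0" using True zdef t by (auto simp: add_nonneg_eq_0_iff)
  thus ?thesis by (simp add: kr_def fx_def)
next
  case False
  have z0: "z \<ge> 0" using zdef e g t by auto
  hence zp: "z > 0" using False by simp
  have A: "kr e z = fx e - (if e = 0 then 0 else e * ln z)"
  proof (cases "e = 0")
    case True thus ?thesis by (simp add: kr_def fx_def)
  next
    case False hence "e > 0" using e by simp
    thus ?thesis using kr_split[OF _ zp] False by simp
  qed
  have B: "g * ln z \<ge> fx g + g * ln (1-t)"
  proof (cases "g = 0")
    case True thus ?thesis by (simp add: fx_def)
  next
    case False
    hence gp: "g > 0" using g by simp
    have "(1-t)*g \<le> z" using zdef t e by auto
    moreover have "(1-t)*g > 0" using gp t by auto
    ultimately have "ln ((1-t)*g) \<le> ln z" by simp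
    hence "ln (1-t) + ln g \<le> ln z" using gp t by (simp add: ln_mult)
    hence "g * (ln (1-t) + ln g) \<le> g * ln z" using gp by (intro mult_left_mono) auto
    thus ?thesis using gp by (simp add: fx_def algebra_simps)
  qed
  show ?thesis using A B False by (cases "e = 0") (auto simp: algebra_simps)
qed

lemma per_term_tan:
  assumes e: "e \<ge> 0" and g: "g \<ge> 0" and t: "0 < t" "t < 1" and zdef: "z = (1-t)*g + t*e"
  shows "fx z - fx g \<le> t * ((e - g) + (if z = 0 then 0 else ln z * (e - g)))"
proof (cases "z = 0")
  case True
  have "(1-t)*g \<ge> 0" "t*e \<ge> 0" using e g t by auto
  hence "e = 0" "g = 0" using True zdef t by (auto simp: add_nonneg_eq_0_iff)
  thus ?thesis using True by (simp add: fx_def)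
next
  case False
  have z0: "z \<ge> 0" using zdef e g t by auto
  hence zp: "z > 0" using False by simp
  have "z - g = t * (e - g)" using zdef by (simp add: algebra_simps)
  hence "fx z - fx g \<le> (1 + ln z) * (t * (e - g))" using tangent[OF zp g] by simp
  thus ?thesis using False by (simp add: algebra_simps)
qed

lemma per_term_final:
  assumes e: "e > 0" and g: "g > 0" and t: "0 < t" "t < 1" and zdef: "z = (1-t)*g + t*e"
  shows "kr e g \<le> kr e z + t * (e * e / g)"
proof -
  have zp: "z > 0" using zdef e g t by (smt (verit) mult_pos_pos)
  have "ln (z/g) \<le> z/g - 1" using zp g by (intro ln_le_minus_one) simp
  hence "ln z - ln g \<le> z/g - 1" using zp g by (simp add: ln_div)
  also have "z/g - 1 = t*(e - g)/g" using zdef g by (simp add: field_simps)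
  also have "\<dots> \<le> t*e/g" using t g e by (simp add: divide_right_mono algebra_simps)
  finally have "ln z - ln g \<le> t*e/g" .
  hence "e * (ln z - ln g) \<le> e * (t*e/g)" using e by (intro mult_left_mono) auto
  thus ?thesis using kr_split[OF e g] kr_split[OF e zp] by (simp add: algebra_simps)
qed

lemma ln_bound: fixes t :: real assumes "0 < t" "t \<le> 1/2" shows "- ln (1-t) \<le> 2*t"
proof -
  have "ln (1/(1-t)) \<le> 1/(1-t) - 1" using assms by (intro ln_le_minus_one) auto
  hence "- ln (1-t) \<le> t/(1-t)" using assms by (simp add: ln_div field_simps)
  also have "\<dots> \<le> 2*t" using assms by (simp add: field_simps)
  finally show ?thesis .
qed

lemma eps_lemma:
  fixes x B K :: real
  assumes K: "K \<ge> 0" and H: "\<And>t. 0 < t \<Longrightarrow> t \<le> 1/2 \<Longrightarrow> x \<le> B + t * K"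
  shows "x \<le> B"
proof (rule ccontr)
  assume "\<not> x \<le> B"
  hence d: "x - B > 0" by simp
  define t where "t = min (1/2) ((x - B)/(2*(K+1)))"
  have "(x - B)/(2*(K+1)) > 0" using d K by simp
  hence tp: "t > 0" "t \<le> 1/2" unfolding t_def by (simp, simp only: min.cobounded1)
  have "t \<le> (x - B)/(2*(K+1))" by (simp add: t_def)
  hence "t * K \<le> (x - B)/(2*(K+1)) * K" using K by (intro mult_right_mono) auto
  also have "\<dots> = (x - B) * (K/(2*(K+1)))" by simp
  also have "\<dots> < (x - B) * 1" using d K by (intro mult_strict_left_mono) (auto simp: field_simps)
  finally show False using H[OF tp] by simp
qed

lemma ereal_final:
  fixes M S Dbf Ds D1 :: real and X :: ereal
  assumes S: "S > 0" and B: "Dbf \<le> Ds + 2*M*S"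
    and H: "ereal M \<le> (ereal D1 - ereal Ds + X - ereal D1) / ereal (2*S)"
  shows "ereal Dbf \<le> X"
proof (cases X)
  case (real r)
  have "ereal D1 - ereal Ds + X - ereal D1 = ereal (r - Ds)" using real by simp
  hence "ereal M \<le> ereal ((r - Ds)/(2*S))" using H S by (simp add: ereal_divide)
  hence "M \<le> (r - Ds)/(2*S)" by simp
  hence "M * (2*S) \<le> r - Ds" using S by (simp add: pos_le_divide_eq)
  thus ?thesis using real B by (simp add: algebra_simps)
next
  case PInf thus ?thesis by simp
next
  case MInf
  hence "ereal M \<le> -\<infinity>" using H S by (simp add: ereal_divide)
  thus ?thesis by simp
qed

lemma negent_fx: "negent n k z = (\<Sum>i<n. \<Sum>l<k. fx (z i l))"
  by (simp add: negent_def fx_def)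

lemma simplex_sum1: "simplexn n k z \<Longrightarrow> i < n \<Longrightarrow> (\<Sum>l<k. z i l) = 1"
  by (simp add: simplexn_def in_simplex_def)

lemma simplex_nn: "simplexn n k z \<Longrightarrow> i < n \<Longrightarrow> l < k \<Longrightarrow> 0 \<le> z i l"
  by (simp add: simplexn_def in_simplex_def)

lemma convex_between:
  fixes x y c d t :: real
  assumes "0 \<le> t" "t \<le> 1" "c \<le> x" "x \<le> d" "c \<le> y" "y \<le> d"
  shows "c \<le> (1-t)*x + t*y" "(1-t)*x + t*y \<le> d"
proof -
  have "(1-t)*c \<le> (1-t)*x" "t*c \<le> t*y" using assms by (auto intro: mult_left_mono)
  thus "c \<le> (1-t)*x + t*y" by (simp add: algebra_simps)
  have "(1-t)*x \<le> (1-t)*d" "t*y \<le> t*d" using assms by (auto intro: mult_left_mono)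
  thus "(1-t)*x + t*y \<le> d" by (simp add: algebra_simps)
qed

lemma Aop_conv: "Aop n k p h (\<lambda>i l. (1-t)*g i l + t*e i l) j = (1-t) * Aop n k p h g j + t * Aop n k p h e j"
proof -
  have "\<And>i l. Amat n p h j i l * ((1-t)*g i l + t*e i l) = (1-t)*(Amat n p h j i l * g i l) + t*(Amat n p h j i l * e i l)"
    by (simp add: algebra_simps)
  thus ?thesis by (simp only: Aop_def sum.distrib sum_distrib_left[symmetric])
qed

lemma polyP_conv:
  assumes "polyP n k p h b \<epsilon> g" "polyP n k p h b \<epsilon> e" "0 \<le> t" "t \<le> 1"
  shows "polyP n k p h b \<epsilon> (\<lambda>i l. (1-t)*g i l + t*e i l)"
proof -
  have sg: "simplexn n k g" and se: "simplexn n k e" using assms by (auto simp: polyP_def)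
  have "simplexn n k (\<lambda>i l. (1-t)*g i l + t*e i l)"
    unfolding simplexn_def in_simplex_def
  proof (intro allI impI conjI)
    fix i l assume "i < n" "l < k"
    thus "0 \<le> (1-t)*g i l + t*e i l" using simplex_nn[OF sg] simplex_nn[OF se] assms by auto
  next
    fix i assume i: "i < n"
    show "(\<Sum>l<k. (1-t)*g i l + t*e i l) = 1"
      using simplex_sum1[OF sg i] simplex_sum1[OF se i] by (simp add: sum.distrib sum_distrib_left[symmetric])
  qed
  moreover have "\<forall>j<p+k. b j - \<epsilon> j \<le> Aop n k p h (\<lambda>i l. (1-t)*g i l + t*e i l) j \<and>
       Aop n k p h (\<lambda>i l. (1-t)*g i l + t*e i l) j \<le> b j + \<epsilon> j"
    using assms convex_between[of t] unfolding Aop_conv polyP_def by meson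
  ultimately show ?thesis by (simp add: polyP_def)
qed

lemma double_member_le:
  fixes d :: "nat \<Rightarrow> nat \<Rightarrow> real"
  assumes "\<And>i l. i < n \<Longrightarrow> l < k \<Longrightarrow> 0 \<le> d i l" "i0 < n" "l0 < k"
  shows "d i0 l0 \<le> (\<Sum>i<n. \<Sum>l<k. d i l)"
proof -
  have "d i0 l0 \<le> (\<Sum>l<k. d i0 l)" using assms by (intro member_le_sum) auto
  also have "\<dots> \<le> (\<Sum>i<n. \<Sum>l<k. d i l)" using assms by (intro member_le_sum sum_nonneg) auto
  finally show ?thesis .
qed

lemma maxent_bound:
  assumes Pe: "polyP n k p h b \<epsilon> e" and mx: "is_maxent n k p h b \<epsilon> g"
  shows "\<forall>i<n. \<forall>l<k. e i l > 0 \<longrightarrow> g i l > 0"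
    and "(\<Sum>i<n. \<Sum>l<k. kr (e i l) (g i l)) \<le> negent n k e - negent n k g"
proof -
  have Pg: "polyP n k p h b \<epsilon> g" and mn: "\<And>z. polyP n k p h b \<epsilon> z \<Longrightarrow> negent n k g \<le> negent n k z"
    using mx by (auto simp: is_maxent_def)
  have se: "simplexn n k e" and sg: "simplexn n k g" using Pe Pg by (auto simp: polyP_def)
  note enn = simplex_nn[OF se] and gnn = simplex_nn[OF sg]
  define zt where "zt t = (\<lambda>i l. (1-t)*g i l + t*e i l)" for t :: real
  define w where "w t i l = (if zt t i l = 0 then 0 else ln (zt t i l) * (e i l - g i l))" for t i l
  define B where "B = negent n k e - negent n k g"
  have sum0: "(\<Sum>i<n. \<Sum>l<k. e i l - g i l) = 0"
    using simplex_sum1[OF se] simplex_sum1[OF sg] by (simp add: sum_subtractf)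
  have sumg: "(\<Sum>i<n. \<Sum>l<k. g i l * c) = real n * c" for c
    using simplex_sum1[OF sg] by (simp add: sum_distrib_right[symmetric])
  have Wnn: "0 \<le> (\<Sum>i<n. \<Sum>l<k. w t i l)" if t: "0 < t" "t < 1" for t
  proof -
    have "negent n k g \<le> negent n k (zt t)" using mn polyP_conv[OF Pg Pe] t unfolding zt_def by auto
    also have "negent n k (zt t) - negent n k g = (\<Sum>i<n. \<Sum>l<k. fx (zt t i l) - fx (g i l))"
      by (simp add: negent_fx sum_subtractf)
    also have "\<dots> \<le> (\<Sum>i<n. \<Sum>l<k. t * ((e i l - g i l) + w t i l))"
      unfolding w_def using per_term_tan[OF enn gnn t] zt_def by (intro sum_mono) auto
    also have "\<dots> = t * (\<Sum>i<n. \<Sum>l<k. w t i l)"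
      using sum0 by (simp add: sum_distrib_left[symmetric] sum.distrib)
    finally have "0 \<le> t * (\<Sum>i<n. \<Sum>l<k. w t i l)" by simp
    thus ?thesis using t by (simp add: zero_le_mult_iff)
  qed
  have Rb: "(\<Sum>i<n. \<Sum>l<k. kr (e i l) (zt t i l)) \<le> B + 2 * real n * t" if t: "0 < t" "t \<le> 1/2" for t
  proof -
    have t1: "t < 1" using t by simp
    have "(\<Sum>i<n. \<Sum>l<k. kr (e i l) (zt t i l)) \<le>
        (\<Sum>i<n. \<Sum>l<k. fx (e i l) - fx (g i l) - g i l * ln (1-t) - w t i l)"
      unfolding w_def using per_term_R[OF enn gnn t(1) t1] zt_def by (intro sum_mono) auto
    also have "\<dots> = B - real n * ln (1-t) - (\<Sum>i<n. \<Sum>l<k. w t i l)"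
      using sumg[of "ln (1-t)"] by (simp add: B_def negent_fx sum_subtractf)
    also have "\<dots> \<le> B + 2 * real n * t"
    proof -
      have "real n * (- ln (1-t)) \<le> real n * (2*t)" using ln_bound[OF t] by (intro mult_left_mono) auto
      thus ?thesis using Wnn[OF t(1) t1] by (simp add: algebra_simps)
    qed
    finally show ?thesis .
  qed
  have krlow: "e i l - zt t i l \<le> kr (e i l) (zt t i l)" if "i < n" "l < k" "0 < t" "t < 1" for i l t
    using that enn gnn unfolding zt_def
    by (intro kr_ge) (auto intro!: add_nonneg_pos add_nonneg_nonneg mult_pos_pos)
  have sumz: "(\<Sum>i<n. \<Sum>l<k. e i l - zt t i l) = 0" if "0 \<le> t" "t \<le> 1" for t
  proof -
    have "simplexn n k (zt t)" using polyP_conv[OF Pg Pe that] unfolding zt_def polyP_def by auto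
    thus ?thesis using simplex_sum1[OF se] simplex_sum1 by (simp add: sum_subtractf)
  qed
  show pos: "\<forall>i<n. \<forall>l<k. e i l > 0 \<longrightarrow> g i l > 0"
  proof (intro allI impI, rule ccontr)
    fix i0 l0 assume i0: "i0 < n" and l0: "l0 < k" and ep: "e i0 l0 > 0" and ng: "\<not> g i0 l0 > 0"
    hence g0: "g i0 l0 = 0" using gnn by force
    define E where "E = e i0 l0"
    define K where "K = (\<bar>B\<bar> + real n + E + 1) / E"
    define t where "t = min (1/2) (exp (- K))"
    have tp: "t > 0" "t \<le> 1/2" unfolding t_def by (simp, simp only: min.cobounded1)
    have "t \<le> exp (- K)" unfolding t_def by (simp only: min.cobounded2)
    hence "ln t \<le> - K" using tp by (metis ln_exp ln_le_cancel_iff exp_gt_zero)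
    hence "E * K \<le> E * (- ln t)" using ep E_def by (intro mult_left_mono) auto
    hence lnt: "\<bar>B\<bar> + real n + E + 1 \<le> - E * ln t" using ep E_def by (simp add: K_def)
    have z0: "zt t i0 l0 = t * E" by (simp add: zt_def g0 E_def)
    have kr0: "kr (e i0 l0) (zt t i0 l0) = - E * ln t"
      using z0 tp ep by (simp add: kr_def E_def ln_div ln_mult algebra_simps)
    have "kr (e i0 l0) (zt t i0 l0) - (e i0 l0 - zt t i0 l0) \<le>
       (\<Sum>i<n. \<Sum>l<k. kr (e i l) (zt t i l) - (e i l - zt t i l))"
      using krlow tp by (intro double_member_le[OF _ i0 l0]) auto
    also have "\<dots> = (\<Sum>i<n. \<Sum>l<k. kr (e i l) (zt t i l))" using sumz[of t] tp
      by (simp add: sum_subtractf)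
    also have "\<dots> \<le> B + 2 * real n * t" using Rb[OF tp] .
    also have "\<dots> \<le> B + real n"
    proof -
      have "real n * (2*t) \<le> real n * 1" using tp by (intro mult_left_mono) auto
      thus ?thesis by simp
    qed
    finally have "- E * ln t - E \<le> B + real n" using kr0 z0 E_def tp ep
      by (smt (verit) mult_nonneg_nonneg)
    thus False using lnt by simp
  qed
  define C where "C = (\<Sum>i<n. \<Sum>l<k. if e i l = 0 then 0 else e i l * e i l / g i l)"
  have Cnn: "C \<ge> 0" unfolding C_def using enn gnn by (intro sum_nonneg) auto
  show "(\<Sum>i<n. \<Sum>l<k. kr (e i l) (g i l)) \<le> B" unfolding B_def[symmetric]
  proof (rule eps_lemma[where K = "2 * real n + C"])
    show "0 \<le> 2 * real n + C" using Cnn by simp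
  next
    fix t :: real assume t: "0 < t" "t \<le> 1/2"
    have "(\<Sum>i<n. \<Sum>l<k. kr (e i l) (g i l)) \<le>
        (\<Sum>i<n. \<Sum>l<k. kr (e i l) (zt t i l) + t * (if e i l = 0 then 0 else e i l * e i l / g i l))"
    proof (intro sum_mono)
      fix i l assume "i \<in> {..<n}" "l \<in> {..<k}"
      hence il: "i < n" "l < k" by auto
      show "kr (e i l) (g i l) \<le> kr (e i l) (zt t i l) + t * (if e i l = 0 then 0 else e i l * e i l / g i l)"
      proof (cases "e i l = 0")
        case True thus ?thesis by (simp add: kr_def)
      next
        case False
        hence ep: "e i l > 0" using enn[OF il] by simp
        hence gp: "g i l > 0" using pos il by auto
        show ?thesis using per_term_final[OF ep gp t(1)] t False unfolding zt_def by simp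
      qed
    qed
    also have "\<dots> = (\<Sum>i<n. \<Sum>l<k. kr (e i l) (zt t i l)) + t * C"
      by (simp add: C_def sum.distrib sum_distrib_left)
    also have "\<dots> \<le> B + 2 * real n * t + t * C" using Rb[OF t] by simp
    finally show "(\<Sum>i<n. \<Sum>l<k. kr (e i l) (g i l)) \<le> B + t * (2 * real n + C)"
      by (simp add: algebra_simps)
  qed
qed

lemma dKL_real:
  assumes "\<And>i l. i < n \<Longrightarrow> l < k \<Longrightarrow> 0 \<le> \<mu> i l"
    and "\<And>i l. i < n \<Longrightarrow> l < k \<Longrightarrow> 0 < \<mu> i l \<Longrightarrow> 0 < \<nu> i l"
  shows "dKL n k \<mu> \<nu> = ereal (\<Sum>i<n. \<Sum>l<k. kr (\<mu> i l) (\<nu> i l))"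
proof -
  have "klterm (\<mu> i l) (\<nu> i l) = ereal (kr (\<mu> i l) (\<nu> i l))" if "i < n" "l < k" for i l
    using assms[OF that] by (cases "\<mu> i l = 0") (auto simp: klterm_def kr_def)
  hence "dKL n k \<mu> \<nu> = (\<Sum>i<n. \<Sum>l<k. ereal (kr (\<mu> i l) (\<nu> i l)))"
    unfolding dKL_def by (intro sum.cong refl) auto
  thus ?thesis by (simp add: sum_ereal)
qed

lemma swap_theta:
  "(\<Sum>i<n. \<Sum>l<k. z i l * atheta n k p h \<theta> i l) = (\<Sum>j<p+k. \<theta> j * Aop n k p h z j)"
proof -
  have "(\<Sum>i<n. \<Sum>l<k. z i l * atheta n k p h \<theta> i l) = (\<Sum>i<n. \<Sum>l<k. \<Sum>j<p+k. \<theta> j * (Amat n p h j i l * z i l))"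
    by (simp add: atheta_def sum_distrib_left mult_ac)
  also have "\<dots> = (\<Sum>i<n. \<Sum>j<p+k. \<Sum>l<k. \<theta> j * (Amat n p h j i l * z i l))"
    by (rule sum.cong[OF refl], rule sum.swap)
  also have "\<dots> = (\<Sum>j<p+k. \<Sum>i<n. \<Sum>l<k. \<theta> j * (Amat n p h j i l * z i l))"
    by (rule sum.swap)
  also have "\<dots> = (\<Sum>j<p+k. \<theta> j * Aop n k p h z j)"
    by (simp add: Aop_def sum_distrib_left)
  finally show ?thesis .
qed

lemma theta_bound:
  assumes k: "k \<ge> 1" and se: "simplexn n k e" and sg: "simplexn n k g"
    and close: "\<And>j. j < p+k \<Longrightarrow> \<bar>Aop n k p h e j - Aop n k p h g j\<bar> \<le> 2 * M"
  shows "dKL n k e (gtheta n k p h \<theta>) = ereal (\<Sum>i<n. \<Sum>l<k. kr (e i l) (gtheta n k p h \<theta> i l))"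
    and "negent n k e - negent n k g \<le> (\<Sum>i<n. \<Sum>l<k. kr (e i l) (gtheta n k p h \<theta> i l)) + 2 * M * (\<Sum>j<p+k. \<bar>\<theta> j\<bar>)"
proof -
  define q where "q = gtheta n k p h \<theta>"
  define a where "a = atheta n k p h \<theta>"
  define Z where "Z i = (\<Sum>l<k. exp (a i l))" for i
  have Zp: "Z i > 0" for i unfolding Z_def using k by (intro sum_pos) (auto simp: lessThan_empty_iff)
  have qdef: "q i l = exp (a i l) / Z i" for i l by (simp add: q_def gtheta_def a_def Z_def)
  have qp: "q i l > 0" for i l using Zp by (simp add: qdef)
  have lnq: "ln (q i l) = a i l - ln (Z i)" for i l using Zp[of i] by (simp add: qdef ln_div)
  have q1: "(\<Sum>l<k. q i l) = 1" for i using Zp[of i] by (simp add: qdef sum_divide_distrib[symmetric] Z_def)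
  note enn = simplex_nn[OF se] and gnn = simplex_nn[OF sg]
  show "dKL n k e (gtheta n k p h \<theta>) = ereal (\<Sum>i<n. \<Sum>l<k. kr (e i l) (gtheta n k p h \<theta> i l))"
    using qp enn unfolding q_def by (intro dKL_real) auto
  have zlnq: "(\<Sum>i<n. \<Sum>l<k. z i l * ln (q i l)) = (\<Sum>j<p+k. \<theta> j * Aop n k p h z j) - (\<Sum>i<n. ln (Z i))"
    if sz: "simplexn n k z" for z
  proof -
    have "(\<Sum>i<n. \<Sum>l<k. z i l * ln (q i l)) = (\<Sum>i<n. (\<Sum>l<k. z i l * a i l) - ln (Z i))"
    proof (rule sum.cong[OF refl])
      fix i assume "i \<in> {..<n}"
      hence "(\<Sum>l<k. z i l) = 1" using simplex_sum1[OF sz] by auto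
      thus "(\<Sum>l<k. z i l * ln (q i l)) = (\<Sum>l<k. z i l * a i l) - ln (Z i)"
        by (simp add: lnq right_diff_distrib sum_subtractf sum_distrib_right[symmetric])
    qed
    also have "\<dots> = (\<Sum>j<p+k. \<theta> j * Aop n k p h z j) - (\<Sum>i<n. ln (Z i))"
      by (simp add: sum_subtractf a_def swap_theta)
    finally show ?thesis .
  qed
  have Ds: "(\<Sum>i<n. \<Sum>l<k. kr (e i l) (q i l)) = negent n k e - (\<Sum>i<n. \<Sum>l<k. e i l * ln (q i l))"
  proof -
    have "kr (e i l) (q i l) = fx (e i l) - e i l * ln (q i l)" if "i < n" "l < k" for i l
      using enn[OF that] qp[of i l] by (cases "e i l = 0") (auto simp: kr_def fx_def ln_div right_diff_distrib)
    hence "(\<Sum>i<n. \<Sum>l<k. kr (e i l) (q i l)) = (\<Sum>i<n. \<Sum>l<k. fx (e i l) - e i l * ln (q i l))"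
      by (intro sum.cong refl) auto
    thus ?thesis by (simp add: negent_fx sum_subtractf)
  qed
  have gib: "(\<Sum>i<n. \<Sum>l<k. g i l * ln (q i l)) \<le> negent n k g"
  proof -
    have "(\<Sum>i<n. \<Sum>l<k. g i l - q i l) \<le> (\<Sum>i<n. \<Sum>l<k. fx (g i l) - g i l * ln (q i l))"
      using gibbs_term[OF qp] gnn by (intro sum_mono) auto
    moreover have "(\<Sum>i<n. \<Sum>l<k. g i l - q i l) = 0"
      using simplex_sum1[OF sg] q1 by (simp add: sum_subtractf)
    ultimately show ?thesis by (simp add: negent_fx sum_subtractf)
  qed
  have "(\<Sum>j<p+k. \<theta> j * (Aop n k p h e j - Aop n k p h g j)) \<le> (\<Sum>j<p+k. \<bar>\<theta> j\<bar> * (2*M))"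
  proof (rule sum_mono)
    fix j assume "j \<in> {..<p+k}"
    hence c: "\<bar>Aop n k p h e j - Aop n k p h g j\<bar> \<le> 2 * M" using close by auto
    have "\<theta> j * (Aop n k p h e j - Aop n k p h g j) \<le> \<bar>\<theta> j\<bar> * \<bar>Aop n k p h e j - Aop n k p h g j\<bar>"
      by (metis abs_ge_self abs_mult)
    also have "\<dots> \<le> \<bar>\<theta> j\<bar> * (2*M)" using c by (intro mult_left_mono) auto
    finally show "\<theta> j * (Aop n k p h e j - Aop n k p h g j) \<le> \<bar>\<theta> j\<bar> * (2*M)" .
  qed
  hence "(\<Sum>j<p+k. \<theta> j * Aop n k p h e j) - (\<Sum>j<p+k. \<theta> j * Aop n k p h g j) \<le> 2 * M * (\<Sum>j<p+k. \<bar>\<theta> j\<bar>)"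
    by (simp add: sum_subtractf right_diff_distrib sum_distrib_left[symmetric] sum_distrib_right[symmetric] mult_ac)
  thus "negent n k e - negent n k g \<le> (\<Sum>i<n. \<Sum>l<k. kr (e i l) (gtheta n k p h \<theta> i l)) + 2 * M * (\<Sum>j<p+k. \<bar>\<theta> j\<bar>)"
    using Ds gib zlnq[OF se] zlnq[OF sg] unfolding q_def[symmetric] by linarith
qed

theorem lemma7:
  fixes n k p :: nat
    and h :: "nat \<Rightarrow> nat \<Rightarrow> nat option"
    and \<eta> g\<^sub>b\<^sub>f g\<^sub>d\<^sub>s :: "nat \<Rightarrow> nat \<Rightarrow> real"
    and b \<epsilon> \<theta>s :: "nat \<Rightarrow> real"
  assumes "n \<ge> 1" and "k \<ge> 2" and "p \<ge> 1"
    and "\<forall>j<p. \<forall>i<n. \<forall>l. h j i = Some l \<longrightarrow> l < k"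
    and "\<forall>j<p. nrule n h j \<ge> 1"
    and "simplexn n k \<eta>"
    and "\<forall>j<p+k. 0 \<le> \<epsilon> j \<and> b j - \<epsilon> j \<le> Aop n k p h \<eta> j \<and> Aop n k p h \<eta> j \<le> b j + \<epsilon> j"
    and "\<forall>\<theta>. dKL n k \<eta> (gtheta n k p h \<theta>s) \<le> dKL n k \<eta> (gtheta n k p h \<theta>)"
    and "\<exists>j<p+k. \<theta>s j \<noteq> 0"
    and "is_maxent n k p h b \<epsilon> g\<^sub>b\<^sub>f"
    and "is_ocds n k p h g\<^sub>d\<^sub>s"
    and "\<forall>j<p. 0 < Aop n k p h \<eta> j \<and> Aop n k p h \<eta> j < 1"
    and "ereal (Max ((\<lambda>j. \<bar>\<epsilon> j\<bar>) ` {..<p+k})) \<le>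
      (dKL n k \<eta> (gds k p h (\<lambda>l. Aop n k p h \<eta> (p + l)) (Aop n k p h \<eta>))
        - dKL n k \<eta> (gtheta n k p h \<theta>s)
        + dKL n k \<eta> g\<^sub>d\<^sub>s
        - dKL n k \<eta> (gds k p h (\<lambda>l. Aop n k p h \<eta> (p + l)) (Aop n k p h \<eta>)))
      / ereal (2 * (\<Sum>j<p+k. \<bar>\<theta>s j\<bar>))"
  shows "dKL n k \<eta> g\<^sub>b\<^sub>f \<le> dKL n k \<eta> g\<^sub>d\<^sub>s"
proof -
  note A = assms
  have se: "simplexn n k \<eta>" using A(6) .
  have Pe: "polyP n k p h b \<epsilon> \<eta>" using A(6,7) by (simp add: polyP_def)
  have Pg: "polyP n k p h b \<epsilon> g\<^sub>b\<^sub>f" using A(10) by (simp add: is_maxent_def)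
  hence sg: "simplexn n k g\<^sub>b\<^sub>f" by (simp add: polyP_def)
  note enn = simplex_nn[OF se]
  note mb = maxent_bound[OF Pe A(10)]
  have Dbf: "dKL n k \<eta> g\<^sub>b\<^sub>f = ereal (\<Sum>i<n. \<Sum>l<k. kr (\<eta> i l) (g\<^sub>b\<^sub>f i l))"
    using mb(1) enn by (intro dKL_real) auto
  define M where "M = Max ((\<lambda>j. \<bar>\<epsilon> j\<bar>) ` {..<p+k})"
  have Mge: "\<bar>\<epsilon> j\<bar> \<le> M" if "j < p+k" for j
    unfolding M_def using that by (intro Max_ge) auto
  have close: "\<bar>Aop n k p h \<eta> j - Aop n k p h g\<^sub>b\<^sub>f j\<bar> \<le> 2 * M" if "j < p+k" for j
    using Pe Pg that Mge[OF that] unfolding polyP_def by fastforce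
  have k1: "k \<ge> 1" using A(2) by simp
  note tb = theta_bound[OF k1 se sg close, of \<theta>s]
  define S where "S = (\<Sum>j<p+k. \<bar>\<theta>s j\<bar>)"
  have Sp: "S > 0"
  proof -
    obtain j0 where j0: "j0 < p+k" "\<theta>s j0 \<noteq> 0" using A(9) by blast
    have "\<bar>\<theta>s j0\<bar> \<le> S" unfolding S_def using j0 by (intro member_le_sum) auto
    thus ?thesis using j0 by simp
  qed
  define w where "w l = Aop n k p h \<eta> (p + l)" for l
  define bb where "bb = Aop n k p h \<eta>"
  have Arow: "Amat n p h (p+l) i l' = (if l' = l then 1 / real n else 0)" for l i l'
    by (simp add: Amat_def)
  have wnn: "w l \<ge> 0" for l
    unfolding w_def Aop_def Arow using enn by (intro sum_nonneg) auto
  have wpos: "w l > 0" if "i0 < n" "l < k" "\<eta> i0 l > 0" for i0 l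
  proof -
    have "Amat n p h (p+l) i0 l * \<eta> i0 l \<le> w l"
      unfolding w_def Aop_def
      by (rule double_member_le[OF _ that(1,2)]) (use enn in \<open>auto simp: Arow\<close>)
    moreover have "Amat n p h (p+l) i0 l * \<eta> i0 l > 0" using that A(1) by (simp add: Arow)
    ultimately show ?thesis by simp
  qed
  have bb01: "0 < bb j" "bb j < 1" if "j < p" for j using A(12) that by (auto simp: bb_def)
  have kk: "real k - 1 > 0" using A(2) by simp
  have ghnn: "ghat k p h w bb i l \<ge> 0" for i l
    unfolding ghat_def using wnn bb01 kk
    by (intro mult_nonneg_nonneg prod_nonneg) (auto intro!: divide_nonneg_pos less_imp_le)
  have ghpos: "ghat k p h w bb i l > 0" if "w l > 0" for i l
    unfolding ghat_def using that bb01 kk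
    by (intro mult_pos_pos prod_pos) (auto intro!: divide_pos_pos)
  have gdspos: "gds k p h w bb i l > 0" if "i < n" "l < k" "\<eta> i l > 0" for i l
  proof -
    have gp: "ghat k p h w bb i l > 0" using ghpos wpos[OF that] by simp
    have "ghat k p h w bb i l \<le> (\<Sum>l'<k. ghat k p h w bb i l')"
      using that ghnn by (intro member_le_sum) auto
    thus ?thesis using gp by (simp add: gds_def)
  qed
  have D1: "dKL n k \<eta> (gds k p h w bb) = ereal (\<Sum>i<n. \<Sum>l<k. kr (\<eta> i l) (gds k p h w bb i l))"
    using gdspos enn by (intro dKL_real) auto
  have H: "ereal M \<le> (ereal (\<Sum>i<n. \<Sum>l<k. kr (\<eta> i l) (gds k p h w bb i l))
        - ereal (\<Sum>i<n. \<Sum>l<k. kr (\<eta> i l) (gtheta n k p h \<theta>s i l))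
        + dKL n k \<eta> g\<^sub>d\<^sub>s
        - ereal (\<Sum>i<n. \<Sum>l<k. kr (\<eta> i l) (gds k p h w bb i l))) / ereal (2 * S)"
    using A(13) D1 tb(1) unfolding M_def S_def w_def bb_def by simp
  have "(\<Sum>i<n. \<Sum>l<k. kr (\<eta> i l) (g\<^sub>b\<^sub>f i l)) \<le>
      (\<Sum>i<n. \<Sum>l<k. kr (\<eta> i l) (gtheta n k p h \<theta>s i l)) + 2 * M * S"
    using mb(2) tb(2) unfolding S_def by linarith
  from ereal_final[OF Sp this H] show ?thesis using Dbf by simp
qed

end
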